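(* Let $d,m,p,n\ge 1$ and let $\{g_{ij}:1\le i\le m,1\le j\le p\}$ be fixed functions $\mathbb{R}^d\to\mathbb{R}$. Fix $\mathbf{X}=[\mathbf{x}_1,\dots,\mathbf{x}_n]^\top\in\mathbb{R}^{n\times d}$. Let $0<v\le 2$ and $r,s>0$ with $1/r+1/s=1$, and let $b_{m,p,n},c_{m,p,n}>0$. Let $\mathcal{F}$ be the class of maps $\boldsymbol{\Psi}=(\psi_1,\dots,\psi_m):\mathbb{R}^d\to\mathbb{R}^m$ of the form $\psi_i(\mathbf{x})=\sum_{j=1}^p\beta_{ij}g_{ij}(\mathbf{x})$ with coefficient matrix $\mathbf{B}=(\beta_{ij})\in\mathbb{R}^{m\times p}$ satisfying $\|\mathbf{B}\|_r=(\sum_{i,j}|\beta_{ij}|^r)^{1/r}\le b_{m,p,n}$, and assume $\|\mathbf{G}(\mathbf{X})\|_{v,s}\le c_{m,p,n}$, where $\mathbf{G}(\mathbf{X})=(g_{ij}(\mathbf{x}_k))\in\mathbb{R}^{m\times p\times n}$ and $\|\mathbf{G}(\mathbf{X})\|_{v,s}=\big\{\sum_{i=1}^m\sum_{j=1}^p\big(\sum_{k=1}^n|g_{ij}(\mathbf{x}_k)|^v\big)^{s/v}\big\}^{1/s}$. Then for every $\epsilon>0$, $$\log\mathcal{N}\big(\{\boldsymbol{\Psi}(\mathbf{X})\in\mathbb{R}^{n\times m}:\boldsymbol{\Psi}\in\mathcal{F}\},\epsilon,\|\cdot\|_2\big)\le \frac{b_{m,p,n}^2c_{m,p,n}^2}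{\epsilon^2}\log(2mp).$$
   Context: $\boldsymbol{\Psi}(\mathbf{X})=[\boldsymbol{\Psi}(\mathbf{x}_1),\dots,\boldsymbol{\Psi}(\mathbf{x}_n)]^\top$. $\|A\|_2$ denotes the Frobenius norm of a matrix $A$. Proper covering number: $\mathcal{N}(\mathcal{U},\epsilon,\|\cdot\|)$ is the smallest cardinality of a subset $\mathcal{V}\subseteq\mathcal{U}$ such that every $u\in\mathcal{U}$ has some $v\in\mathcal{V}$ with $\|u-v\|\le\epsilon$. *)

theory Defs
  imports "HOL-Analysis.Analysis"
begin

definition covering_number :: "('a \<Rightarrow> 'a \<Rightarrow> real) \<Rightarrow> 'a set \<Rightarrow> real \<Rightarrow> nat" where
  "covering_number dst U eps =
     Inf {card V | V. finite V \<and> V \<subseteq> U \<and> (\<forall>u\<in>U. \<exists>v\<in>V. dst u v \<le> eps)}"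

text \<open>n x m real matrices represented as functions nat => nat => real (entries k<n, i<m);
  Frobenius distance.\<close>
definition frob_dist :: "nat \<Rightarrow> nat \<Rightarrow> (nat \<Rightarrow> nat \<Rightarrow> real) \<Rightarrow> (nat \<Rightarrow> nat \<Rightarrow> real) \<Rightarrow> real" where
  "frob_dist n m A C = sqrt (\<Sum>k<n. \<Sum>i<m. (A k i - C k i)^2)"

definition entry_norm :: "real \<Rightarrow> nat \<Rightarrow> nat \<Rightarrow> (nat \<Rightarrow> nat \<Rightarrow> real) \<Rightarrow> real" where
  "entry_norm r m p B = (\<Sum>i<m. \<Sum>j<p. \<bar>B i j\<bar> powr r) powr (1 / r)"

definition G_norm :: "real \<Rightarrow> real \<Rightarrow> nat \<Rightarrow> nat \<Rightarrow> nat \<Rightarrow>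
    (nat \<Rightarrow> nat \<Rightarrow> 'x \<Rightarrow> real) \<Rightarrow> (nat \<Rightarrow> 'x) \<Rightarrow> real" where
  "G_norm v s m p n g X =
     (\<Sum>i<m. \<Sum>j<p. (\<Sum>k<n. \<bar>g i j (X k)\<bar> powr v) powr (s / v)) powr (1 / s)"

definition Psi_mat :: "nat \<Rightarrow> nat \<Rightarrow> nat \<Rightarrow> (nat \<Rightarrow> nat \<Rightarrow> 'x \<Rightarrow> real) \<Rightarrow>
    (nat \<Rightarrow> 'x) \<Rightarrow> (nat \<Rightarrow> nat \<Rightarrow> real) \<Rightarrow> (nat \<Rightarrow> nat \<Rightarrow> real)" where
  "Psi_mat m p n g X B = (\<lambda>k i. if k < n \<and> i < m then (\<Sum>j<p. B i j * g i j (X k)) else 0)"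

end

theory Submission
  imports Defs "HOL-Analysis.Analysis"
begin


definition ip :: "nat \<Rightarrow> nat \<Rightarrow> (nat\<Rightarrow>nat\<Rightarrow>real) \<Rightarrow> (nat\<Rightarrow>nat\<Rightarrow>real) \<Rightarrow> real" where
  "ip n m A B = (\<Sum>k<n. \<Sum>i<m. A k i * B k i)"

definition nsq :: "nat \<Rightarrow> nat \<Rightarrow> (nat\<Rightarrow>nat\<Rightarrow>real) \<Rightarrow> real" where
  "nsq n m A = (\<Sum>k<n. \<Sum>i<m. (A k i)^2)"

lemma nsq_nonneg: "nsq n m A \<ge> 0"
  unfolding nsq_def by (intro sum_nonneg) auto

lemma nsq_cong: "(\<And>k i. k < n \<Longrightarrow> i < m \<Longrightarrow> A k i = B k i) \<Longrightarrow> nsq n m A = nsq n m B"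
  unfolding nsq_def by (intro sum.cong refl) auto

lemma nsq_diff: "nsq n m (\<lambda>k i. A k i - t * B k i) = nsq n m A - 2*t*ip n m A B + t^2 * nsq n m B"
  unfolding nsq_def ip_def
  by (simp add: power2_diff sum_subtractf sum.distrib sum_distrib_left algebra_simps power_mult_distrib)

lemma nsq_scale: "nsq n m (\<lambda>k i. t * A k i) = t^2 * nsq n m A"
  unfolding nsq_def by (simp add: sum_distrib_left power_mult_distrib)

lemma var_pt:
  fixes p V :: "'z \<Rightarrow> real"
  assumes "finite Z" "sum p Z = 1"
  shows "(\<Sum>z\<in>Z. p z * (w - t * V z)^2) =
    (w - t * (\<Sum>z\<in>Z. p z * V z))^2 + t^2 * ((\<Sum>z\<in>Z. p z * (V z)^2) - (\<Sum>z\<in>Z. p z * V z)^2)"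
proof -
  have "(\<Sum>z\<in>Z. p z * (w - t * V z)^2) = (\<Sum>z\<in>Z. p z * w^2 - 2*t*w*(p z * V z) + t^2 * (p z * (V z)^2))"
    by (intro sum.cong refl) (simp add: power2_diff algebra_simps power_mult_distrib)
  also have "\<dots> = w^2 * sum p Z - 2*t*w*(\<Sum>z\<in>Z. p z * V z) + t^2 * (\<Sum>z\<in>Z. p z * (V z)^2)"
    by (simp add: sum_subtractf sum.distrib sum_distrib_left sum_distrib_right algebra_simps)
  finally show ?thesis using assms by (simp add: power2_diff algebra_simps power_mult_distrib)
qed

lemma var_nsq:
  fixes p :: "'z \<Rightarrow> real"
  assumes "finite Z" "sum p Z = 1"
  shows "(\<Sum>z\<in>Z. p z * nsq n m (\<lambda>k i. w k i - t * V z k i)) =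
    nsq n m (\<lambda>k i. w k i - t * (\<Sum>z\<in>Z. p z * V z k i))
    + t^2 * ((\<Sum>z\<in>Z. p z * nsq n m (V z)) - nsq n m (\<lambda>k i. \<Sum>z\<in>Z. p z * V z k i))"
proof -
  have "(\<Sum>z\<in>Z. p z * nsq n m (\<lambda>k i. w k i - t * V z k i)) =
     (\<Sum>k<n. \<Sum>i<m. \<Sum>z\<in>Z. p z * (w k i - t * V z k i)^2)"
    unfolding nsq_def sum_distrib_left
    by (subst sum.swap, rule sum.cong, simp, subst sum.swap, simp)
  also have "\<dots> = (\<Sum>k<n. \<Sum>i<m. (w k i - t * (\<Sum>z\<in>Z. p z * V z k i))^2 +
     t^2 * ((\<Sum>z\<in>Z. p z * (V z k i)^2) - (\<Sum>z\<in>Z. p z * V z k i)^2))"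
    using var_pt[OF assms] by simp
  also have "\<dots> = nsq n m (\<lambda>k i. w k i - t * (\<Sum>z\<in>Z. p z * V z k i))
    + t^2 * ((\<Sum>k<n. \<Sum>i<m. \<Sum>z\<in>Z. p z * (V z k i)^2) - nsq n m (\<lambda>k i. \<Sum>z\<in>Z. p z * V z k i))"
    unfolding nsq_def by (simp add: sum.distrib sum_subtractf sum_distrib_left right_diff_distrib)
  also have "(\<Sum>k<n. \<Sum>i<m. \<Sum>z\<in>Z. p z * (V z k i)^2) = (\<Sum>z\<in>Z. p z * nsq n m (V z))"
    unfolding nsq_def sum_distrib_left
    by (subst sum.swap, rule sum.cong, simp, subst sum.swap, simp)
  finally show ?thesis .
qed

lemma avg_exists:
  fixes p f :: "'z \<Rightarrow> real"
  assumes "finite Z" "\<And>z. z \<in> Z \<Longrightarrow> p z \<ge> 0" "sum p Z = 1"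
  shows "\<exists>z\<in>Z. f z \<le> (\<Sum>z\<in>Z. p z * f z)"
proof (rule ccontr)
  let ?S = "\<Sum>z\<in>Z. p z * f z"
  assume "\<not> ?thesis"
  hence lt: "\<And>z. z \<in> Z \<Longrightarrow> ?S < f z" by force
  obtain z0 where z0: "z0 \<in> Z" "p z0 > 0"
    using assms by (metis le_less sum.neutral zero_neq_one)
  have "(\<Sum>z\<in>Z. p z * (f z - ?S)) > 0"
  proof (rule sum_pos2[OF assms(1) z0(1)])
    show "0 < p z0 * (f z0 - ?S)" using z0 lt by simp
    show "\<And>i. i \<in> Z \<Longrightarrow> 0 \<le> p i * (f i - ?S)" using lt assms(2) by (simp add: less_imp_le)
  qed
  moreover have "(\<Sum>z\<in>Z. p z * (f z - ?S)) = 0"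
    using assms by (simp add: right_diff_distrib sum_subtractf flip: sum_distrib_right)
  ultimately show False by simp
qed

lemma maurey_step:
  fixes p :: "'z \<Rightarrow> real" and V :: "'z \<Rightarrow> nat \<Rightarrow> nat \<Rightarrow> real"
  assumes fin: "finite Z" and pnn: "\<And>z. z \<in> Z \<Longrightarrow> p z \<ge> 0" and p1: "sum p Z = 1"
    and S2: "(\<Sum>z\<in>Z. p z * nsq n m (V z)) \<le> 1"
    and xM: "\<And>k i. k < n \<Longrightarrow> i < m \<Longrightarrow> x k i = L * (\<Sum>z\<in>Z. p z * V z k i)"
  shows "\<exists>xs. set xs \<subseteq> Z \<and> length xs = j \<and>
     nsq n m (\<lambda>k i. w k i + \<alpha> * (real j * x k i - L * (\<Sum>z\<leftarrow>xs. V z k i)))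
       \<le> nsq n m w + real j * \<alpha>^2 * (L^2 - nsq n m x)"
proof (induction j)
  case 0
  show ?case by (intro exI[of _ "[]"]) simp
next
  case (Suc j)
  then obtain xs where xs: "set xs \<subseteq> Z" "length xs = j"
    and le: "nsq n m (\<lambda>k i. w k i + \<alpha> * (real j * x k i - L * (\<Sum>z\<leftarrow>xs. V z k i)))
       \<le> nsq n m w + real j * \<alpha>^2 * (L^2 - nsq n m x)" by blast
  define W where "W = (\<lambda>k i. w k i + \<alpha> * (real j * x k i - L * (\<Sum>z\<leftarrow>xs. V z k i)))"
  define M where "M = (\<lambda>k i. \<Sum>z\<in>Z. p z * V z k i)"
  have var: "(\<Sum>z\<in>Z. p z * nsq n m (\<lambda>k i. (W k i + \<alpha> * x k i) - (\<alpha> * L) * V z k i)) =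
    nsq n m (\<lambda>k i. (W k i + \<alpha> * x k i) - (\<alpha> * L) * M k i)
    + (\<alpha> * L)^2 * ((\<Sum>z\<in>Z. p z * nsq n m (V z)) - nsq n m M)"
    unfolding M_def by (rule var_nsq[OF fin p1])
  have e1: "nsq n m (\<lambda>k i. (W k i + \<alpha> * x k i) - (\<alpha> * L) * M k i) = nsq n m W"
    by (rule nsq_cong) (simp add: xM M_def)
  have e2: "nsq n m x = L^2 * nsq n m M"
  proof -
    have "nsq n m x = nsq n m (\<lambda>k i. L * M k i)" by (rule nsq_cong) (simp add: xM M_def)
    thus ?thesis by (simp add: nsq_scale)
  qed
  have "(\<alpha> * L)^2 * ((\<Sum>z\<in>Z. p z * nsq n m (V z)) - nsq n m M) \<le> \<alpha>^2 * (L^2 - nsq n m x)"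
  proof -
    have "(\<alpha> * L)^2 * (\<Sum>z\<in>Z. p z * nsq n m (V z)) \<le> (\<alpha> * L)^2 * 1"
      by (rule mult_left_mono[OF S2]) simp
    thus ?thesis using e2 by (simp add: algebra_simps power_mult_distrib)
  qed
  with var e1 have avg: "(\<Sum>z\<in>Z. p z * nsq n m (\<lambda>k i. (W k i + \<alpha> * x k i) - (\<alpha> * L) * V z k i))
      \<le> nsq n m W + \<alpha>^2 * (L^2 - nsq n m x)" by linarith
  have "\<exists>z\<in>Z. nsq n m (\<lambda>k i. (W k i + \<alpha> * x k i) - (\<alpha> * L) * V z k i)
      \<le> (\<Sum>z\<in>Z. p z * nsq n m (\<lambda>k i. (W k i + \<alpha> * x k i) - (\<alpha> * L) * V z k i))"
    by (rule avg_exists[OF fin]) (use pnn p1 in auto)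
  then obtain z where z: "z \<in> Z" and zle: "nsq n m (\<lambda>k i. (W k i + \<alpha> * x k i) - (\<alpha> * L) * V z k i)
      \<le> (\<Sum>z\<in>Z. p z * nsq n m (\<lambda>k i. (W k i + \<alpha> * x k i) - (\<alpha> * L) * V z k i))" by blast
  have eq: "(\<lambda>k i. w k i + \<alpha> * (real (Suc j) * x k i - L * (\<Sum>z\<leftarrow>z # xs. V z k i)))
     = (\<lambda>k i. (W k i + \<alpha> * x k i) - (\<alpha> * L) * V z k i)"
    unfolding W_def by (simp add: fun_eq_iff ring_distribs)
  show ?case
  proof (intro exI[of _ "z # xs"] conjI)
    show "set (z # xs) \<subseteq> Z" using z xs by auto
    show "length (z # xs) = Suc j" using xs by simp
    show "nsq n m (\<lambda>k i. w k i + \<alpha> * (real (Suc j) * x k i - L * (\<Sum>z\<leftarrow>z # xs. V z k i)))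
        \<le> nsq n m w + real (Suc j) * \<alpha>\<^sup>2 * (L\<^sup>2 - nsq n m x)"
    proof -
      have "nsq n m W \<le> nsq n m w + real j * \<alpha>^2 * (L^2 - nsq n m x)" using le W_def by simp
      moreover have "real (Suc j) * \<alpha>\<^sup>2 * (L\<^sup>2 - nsq n m x) = real j * \<alpha>^2 * (L^2 - nsq n m x) + \<alpha>^2 * (L^2 - nsq n m x)"
        by (simp add: ring_distribs)
      ultimately show ?thesis unfolding eq using zle avg by linarith
    qed
  qed
qed



lemma holder:
  fixes f h :: "'a \<Rightarrow> real"
  assumes J: "finite J" and r: "r > 1" and s: "s > 1" and rs: "1/r + 1/s = 1"
    and f0: "\<And>j. j \<in> J \<Longrightarrow> f j \<ge> 0" and h0: "\<And>j. j \<in> J \<Longrightarrow> h j \<ge> 0"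
  shows "(\<Sum>j\<in>J. f j * h j) \<le> (\<Sum>j\<in>J. f j powr r) powr (1/r) * (\<Sum>j\<in>J. h j powr s) powr (1/s)"
proof -
  define SA where "SA = (\<Sum>j\<in>J. f j powr r)"
  define SB where "SB = (\<Sum>j\<in>J. h j powr s)"
  define A where "A = SA powr (1/r)"
  define B where "B = SB powr (1/s)"
  have SA0: "SA \<ge> 0" unfolding SA_def by (intro sum_nonneg) auto
  have SB0: "SB \<ge> 0" unfolding SB_def by (intro sum_nonneg) auto
  show ?thesis
  proof (cases "SA = 0 \<or> SB = 0")
    case True
    then show ?thesis
    proof
      assume "SA = 0"
      hence "\<forall>j\<in>J. f j powr r = 0" unfolding SA_def using J by (subst (asm) sum_nonneg_eq_0_iff) auto
      hence "\<forall>j\<in>J. f j = 0" by simp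
      thus ?thesis by (simp add: A_def B_def)
    next
      assume "SB = 0"
      hence "\<forall>j\<in>J. h j powr s = 0" unfolding SB_def using J by (subst (asm) sum_nonneg_eq_0_iff) auto
      hence "\<forall>j\<in>J. h j = 0" by simp
      thus ?thesis by simp
    qed
  next
    case False
    hence SAp: "SA > 0" and SBp: "SB > 0" using SA0 SB0 by auto
    hence Ap: "A > 0" and Bp: "B > 0" by (auto simp: A_def B_def)
    have Ar: "A powr r = SA" unfolding A_def using r SA0 by (simp add: powr_powr)
    have Bs: "B powr s = SB" unfolding B_def using s SB0 by (simp add: powr_powr)
    have "(\<Sum>j\<in>J. f j * h j) = A * B * (\<Sum>j\<in>J. (f j / A) * (h j / B))"
      using Ap Bp by (simp add: sum_distrib_left)
    also have "(\<Sum>j\<in>J. (f j / A) * (h j / B)) \<le> (\<Sum>j\<in>J. (f j / A) powr r / r + (h j / B) powr s / s)"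
      by (intro sum_mono Youngs_inequality) (use r s rs f0 h0 Ap Bp in auto)
    also have "\<dots> = (\<Sum>j\<in>J. f j powr r) / A powr r / r + (\<Sum>j\<in>J. h j powr s) / B powr s / s"
      by (simp add: sum.distrib powr_divide sum_divide_distrib)
    also have "\<dots> = 1" using Ar Bs SAp SBp rs by (simp add: SA_def SB_def)
    finally show ?thesis using Ap Bp by (simp add: A_def B_def SA_def SB_def)
  qed
qed

lemma lv_l2:
  fixes x :: "'a \<Rightarrow> real"
  assumes K: "finite K" and v: "0 < v" "v \<le> 2"
  shows "sqrt (\<Sum>k\<in>K. (x k)^2) \<le> (\<Sum>k\<in>K. \<bar>x k\<bar> powr v) powr (1/v)"
proof -
  define S where "S = (\<Sum>k\<in>K. \<bar>x k\<bar> powr v)"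
  have S0: "S \<ge> 0" unfolding S_def by (intro sum_nonneg) auto
  have each: "\<bar>x k\<bar> \<le> S powr (1/v)" if k: "k \<in> K" for k
  proof -
    have "\<bar>x k\<bar> powr v \<le> S" unfolding S_def using K k
      by (intro member_le_sum) auto
    hence "(\<bar>x k\<bar> powr v) powr (1/v) \<le> S powr (1/v)" by (intro powr_mono2) (use v in auto)
    thus ?thesis using v by (simp add: powr_powr)
  qed
  have "(\<Sum>k\<in>K. (x k)^2) \<le> (\<Sum>k\<in>K. \<bar>x k\<bar> powr v * (S powr (1/v)) powr (2 - v))"
  proof (intro sum_mono)
    fix k assume k: "k \<in> K"
    have "(x k)^2 = \<bar>x k\<bar> powr v * \<bar>x k\<bar> powr (2 - v)"
      by (simp flip: powr_add add: powr_realpow')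
    also have "\<dots> \<le> \<bar>x k\<bar> powr v * (S powr (1/v)) powr (2 - v)"
      by (intro mult_left_mono powr_mono2) (use v each[OF k] in auto)
    finally show "(x k)^2 \<le> \<bar>x k\<bar> powr v * (S powr (1/v)) powr (2 - v)" .
  qed
  also have "\<dots> = S * S powr ((2 - v)/v)"
    by (simp add: S_def sum_distrib_right powr_powr)
  also have "\<dots> = S powr (2/v)"
  proof (cases "S = 0")
    case False
    hence "S powr (2/v) = S powr (1 + (2-v)/v)" using v by (simp add: field_simps)
    also have "\<dots> = S * S powr ((2 - v)/v)" using S0 False by (simp add: powr_add)
    finally show ?thesis by simp
  qed simp
  finally have "sqrt (\<Sum>k\<in>K. (x k)^2) \<le> sqrt (S powr (2/v))" by (rule real_sqrt_le_mono)
  also have "sqrt (S powr (2/v)) = S powr (1/v)"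
    by (subst powr_half_sqrt[symmetric]) (auto simp: powr_powr)
  finally show ?thesis by (simp add: S_def)
qed

lemma cvx_powr:
  fixes a b t r :: real
  assumes "r \<ge> 1" "a \<ge> 0" "b \<ge> 0" "0 \<le> t" "t \<le> 1"
  shows "((1-t)*a + t*b) powr r \<le> (1-t) * a powr r + t * b powr r"
proof (cases "a = 0 \<or> b = 0")
  case True
  have tr: "u powr r \<le> u" if "0 \<le> u" "u \<le> 1" for u :: real
    using powr_mono'[of 1 r u] that assms(1) by simp
  show ?thesis using True
  proof
    assume "a = 0"
    hence "((1-t)*a + t*b) powr r = t powr r * b powr r" by (simp add: powr_mult assms)
    also have "\<dots> \<le> t * b powr r" by (intro mult_right_mono tr) (use assms in auto)
    finally show ?thesis using \<open>a = 0\<close> assms by simp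
  next
    assume "b = 0"
    hence "((1-t)*a + t*b) powr r = (1-t) powr r * a powr r" by (simp add: powr_mult assms)
    also have "\<dots> \<le> (1-t) * a powr r" by (intro mult_right_mono tr) (use assms in auto)
    finally show ?thesis using \<open>b = 0\<close> assms by simp
  qed
next
  case False
  hence "a \<in> {0<..}" "b \<in> {0<..}" using assms by auto
  from convex_onD[OF powr_convex[OF assms(1)] assms(4,5) this] show ?thesis by simp
qed



lemma ip_sym: "ip n m A B = ip n m B A"
  unfolding ip_def by (simp add: mult.commute)

lemma proj_cover:
  fixes U C :: "(nat \<Rightarrow> nat \<Rightarrow> real) set"
  assumes cvx: "\<And>x y t. x \<in> U \<Longrightarrow> y \<in> U \<Longrightarrow> 0 \<le> t \<Longrightarrow> t \<le> 1 \<Longrightarrow> (\<lambda>k i. (1-t) * x k i + t * y k i) \<in> U"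
    and Une: "U \<noteq> {}" and finC: "finite C" and rho: "0 \<le> \<rho>2" "\<rho>2 < \<epsilon>^2" and eps: "\<epsilon> > 0"
    and cov: "\<And>x. x \<in> U \<Longrightarrow> \<exists>c\<in>C. nsq n m (\<lambda>k i. x k i - c k i) \<le> \<rho>2"
  shows "\<exists>V. finite V \<and> V \<subseteq> U \<and> card V \<le> card C \<and> (\<forall>x\<in>U. \<exists>v\<in>V. frob_dist n m x v \<le> \<epsilon>)"
proof -
  define t where "t = (\<epsilon>^2 - \<rho>2) / (2 * \<epsilon>^2)"
  define \<eta> where "\<eta> = t * (\<epsilon>^2 - \<rho>2) / 2"
  have e2: "\<epsilon>^2 > 0" using eps by simp
  have t0: "0 < t" and t1: "t < 1" using rho e2 by (auto simp: t_def field_simps)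
  have eta0: "\<eta> > 0" using t0 rho by (simp add: \<eta>_def)
  have key: "\<eta> / t = (\<epsilon>^2 - \<rho>2) / 2" using t0 by (simp add: \<eta>_def)
  have key2: "(1 - t) * \<epsilon>^2 = \<rho>2 + (\<epsilon>^2 - \<rho>2) / 2" using e2 by (simp add: t_def field_simps)
  have "\<forall>c\<in>C. \<exists>q\<in>U. \<forall>u\<in>U. nsq n m (\<lambda>k i. c k i - q k i) \<le> nsq n m (\<lambda>k i. c k i - u k i) + \<eta>"
  proof
    fix c assume "c \<in> C"
    define S where "S = (\<lambda>u. nsq n m (\<lambda>k i. c k i - u k i)) ` U"
    have Sne: "S \<noteq> {}" using Une by (simp add: S_def)
    have bdd: "bdd_below S" unfolding S_def by (rule bdd_belowI[of _ 0]) (auto simp: nsq_nonneg)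
    have "Inf S < Inf S + \<eta>" using eta0 by simp
    then obtain s where s: "s \<in> S" "s < Inf S + \<eta>" using cInf_less_iff[OF Sne bdd] by blast
    then obtain q where q: "q \<in> U" "s = nsq n m (\<lambda>k i. c k i - q k i)" by (auto simp: S_def)
    have "\<forall>u\<in>U. nsq n m (\<lambda>k i. c k i - q k i) \<le> nsq n m (\<lambda>k i. c k i - u k i) + \<eta>"
    proof
      fix u assume "u \<in> U"
      hence "Inf S \<le> nsq n m (\<lambda>k i. c k i - u k i)" using bdd by (auto simp: S_def intro: cInf_lower)
      thus "nsq n m (\<lambda>k i. c k i - q k i) \<le> nsq n m (\<lambda>k i. c k i - u k i) + \<eta>" using s q by simp
    qed
    thus "\<exists>q\<in>U. \<forall>u\<in>U. nsq n m (\<lambda>k i. c k i - q k i) \<le> nsq n m (\<lambda>k i. c k i - u k i) + \<eta>" using q by blast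
  qed
  hence "\<forall>c\<in>C. \<exists>q. q \<in> U \<and> (\<forall>u\<in>U. nsq n m (\<lambda>k i. c k i - q k i) \<le> nsq n m (\<lambda>k i. c k i - u k i) + \<eta>)"
    by blast
  from bchoice[OF this] obtain P where PP: "\<forall>c\<in>C. P c \<in> U \<and>
      (\<forall>u\<in>U. nsq n m (\<lambda>k i. c k i - P c k i) \<le> nsq n m (\<lambda>k i. c k i - u k i) + \<eta>)"
    by blast
  have P: "\<And>c. c \<in> C \<Longrightarrow> P c \<in> U" using PP by blast
  have Pmin: "\<And>c u. c \<in> C \<Longrightarrow> u \<in> U \<Longrightarrow> nsq n m (\<lambda>k i. c k i - P c k i) \<le> nsq n m (\<lambda>k i. c k i - u k i) + \<eta>"
    using PP by blast
  show ?thesis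
  proof (intro exI[of _ "P ` C"] conjI ballI)
    show "finite (P ` C)" using finC by simp
    show "P ` C \<subseteq> U" using P by auto
    show "card (P ` C) \<le> card C" using finC by (rule card_image_le)
    fix x assume xU: "x \<in> U"
    obtain c where c: "c \<in> C" "nsq n m (\<lambda>k i. x k i - c k i) \<le> \<rho>2" using cov[OF xU] by blast
    define D where "D = (\<lambda>k i. c k i - P c k i)"
    define E where "E = (\<lambda>k i. x k i - P c k i)"
    have qU: "(\<lambda>k i. (1-t) * P c k i + t * x k i) \<in> U" using cvx[OF P[OF c(1)] xU] t0 t1 by simp
    have "nsq n m D \<le> nsq n m (\<lambda>k i. D k i - t * E k i) + \<eta>"
    proof -
      have "(\<lambda>k i. D k i - t * E k i) = (\<lambda>k i. c k i - ((1-t) * P c k i + t * x k i))"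
        by (simp add: D_def E_def fun_eq_iff algebra_simps)
      thus ?thesis using Pmin[OF c(1) qU] by (simp add: D_def)
    qed
    hence i1: "2 * t * ip n m D E \<le> \<eta> + t^2 * nsq n m E" by (simp add: nsq_diff)
    have "nsq n m (\<lambda>k i. x k i - c k i) = nsq n m (\<lambda>k i. E k i - 1 * D k i)"
      by (simp add: D_def E_def)
    also have "\<dots> = nsq n m E - 2 * 1 * ip n m E D + 1^2 * nsq n m D" by (rule nsq_diff)
    finally have i2: "nsq n m E - 2 * ip n m D E + nsq n m D \<le> \<rho>2" using c(2) by (simp add: ip_sym)
    have "2 * ip n m D E \<le> \<eta> / t + t * nsq n m E"
    proof -
      have "t * (2 * ip n m D E) \<le> t * (\<eta> / t + t * nsq n m E)" using i1 t0 by (simp add: algebra_simps power2_eq_square)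
      thus ?thesis using t0 by simp
    qed
    hence "(1 - t) * nsq n m E \<le> \<rho>2 + \<eta> / t" using i2 nsq_nonneg[of n m D] by (simp add: algebra_simps)
    hence "(1 - t) * nsq n m E \<le> (1 - t) * \<epsilon>^2" using key key2 by simp
    hence "nsq n m E \<le> \<epsilon>^2" using t1 by simp
    hence "sqrt (nsq n m E) \<le> sqrt (\<epsilon>^2)" by (rule real_sqrt_le_mono)
    thus "\<exists>v\<in>P ` C. frob_dist n m x v \<le> \<epsilon>"
      using c(1) eps by (intro bexI[of _ "P c"]) (auto simp: frob_dist_def E_def nsq_def)
  qed
qed

lemma jensen_nsq:
  fixes p :: "'z \<Rightarrow> real"
  assumes "finite Z" "\<And>z. z \<in> Z \<Longrightarrow> p z \<ge> 0" "sum p Z = 1"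
  shows "nsq n m (\<lambda>k i. \<Sum>z\<in>Z. p z * V z k i) \<le> (\<Sum>z\<in>Z. p z * nsq n m (V z))"
proof -
  have "(\<Sum>z\<in>Z. p z * nsq n m (\<lambda>k i. (\<Sum>z\<in>Z. p z * V z k i) - 1 * V z k i)) =
    nsq n m (\<lambda>k i. (\<Sum>z\<in>Z. p z * V z k i) - 1 * (\<Sum>z\<in>Z. p z * V z k i))
    + 1^2 * ((\<Sum>z\<in>Z. p z * nsq n m (V z)) - nsq n m (\<lambda>k i. \<Sum>z\<in>Z. p z * V z k i))"
    by (rule var_nsq[OF assms(1,3)])
  moreover have "(\<Sum>z\<in>Z. p z * nsq n m (\<lambda>k i. (\<Sum>z\<in>Z. p z * V z k i) - 1 * V z k i)) \<ge> 0"
    using assms(2) by (intro sum_nonneg mult_nonneg_nonneg nsq_nonneg) auto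
  moreover have "nsq n m (\<lambda>k i. (\<Sum>z\<in>Z. p z * V z k i) - 1 * (\<Sum>z\<in>Z. p z * V z k i)) = 0"
    by (simp add: nsq_def)
  ultimately show ?thesis by simp
qed

lemma cov_le:
  assumes "finite W" "W \<subseteq> U" "\<forall>x\<in>U. \<exists>w\<in>W. frob_dist n m x w \<le> \<epsilon>"
  shows "covering_number (frob_dist n m) U \<epsilon> \<le> card W"
  unfolding covering_number_def
  by (rule cInf_lower) (use assms in \<open>auto intro: bdd_belowI[of _ 0]\<close>)

lemma ln_cov_bound:
  assumes "real N \<le> real M ^ K" "real K \<le> T" "M \<ge> 1"
  shows "ln (real N) \<le> T * ln (real M)"
proof (cases "N = 0")
  case True
  have "0 \<le> T" using assms(2) by linarith
  moreover have "0 \<le> ln (real M)" using assms(3) by simp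
  ultimately show ?thesis using True by simp
next
  case False
  hence "ln (real N) \<le> ln (real M ^ K)" using assms(1,3) by (subst ln_le_cancel_iff) auto
  also have "\<dots> = real K * ln (real M)" using assms(3) by (simp add: ln_realpow)
  also have "\<dots> \<le> T * ln (real M)" using assms by (intro mult_right_mono) auto
  finally show ?thesis .
qed

lemma abstract_cover:
  fixes U :: "(nat\<Rightarrow>nat\<Rightarrow>real) set" and Z :: "'z set" and V :: "'z \<Rightarrow> nat \<Rightarrow> nat \<Rightarrow> real"
  assumes cvx: "\<And>x y t. x \<in> U \<Longrightarrow> y \<in> U \<Longrightarrow> 0 \<le> t \<Longrightarrow> t \<le> 1 \<Longrightarrow> (\<lambda>k i. (1-t) * x k i + t * y k i) \<in> U"
    and Une: "U \<noteq> {}" and finZ: "finite Z" and Zne: "Z \<noteq> {}"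
    and Vn: "\<And>z. z \<in> Z \<Longrightarrow> nsq n m (V z) \<le> 1" and L: "L > 0" and eps: "\<epsilon> > 0"
    and dec: "\<And>x. x \<in> U \<Longrightarrow> \<exists>p. (\<forall>z\<in>Z. p z \<ge> 0) \<and> sum p Z = 1 \<and>
        (\<forall>k<n. \<forall>i<m. x k i = L * (\<Sum>z\<in>Z. p z * V z k i))"
  shows "ln (real (covering_number (frob_dist n m) U \<epsilon>)) \<le> L^2/\<epsilon>^2 * ln (real (card Z))"
proof -
  define T where "T = L^2/\<epsilon>^2"
  have cZ: "card Z \<ge> 1" using finZ Zne by (simp add: Suc_le_eq card_gt_0_iff)
  have e2: "\<epsilon>^2 > 0" using eps by simp
  have S2: "(\<Sum>z\<in>Z. p z * nsq n m (V z)) \<le> 1" if "\<forall>z\<in>Z. p z \<ge> 0" "sum p Z = 1" for p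
  proof -
    have "(\<Sum>z\<in>Z. p z * nsq n m (V z)) \<le> (\<Sum>z\<in>Z. p z * 1)"
      using that Vn by (intro sum_mono mult_left_mono) auto
    thus ?thesis using that by simp
  qed
  have nsqx: "nsq n m x \<le> L^2" if xU0: "x \<in> U" for x
  proof -
    obtain p where p: "\<forall>z\<in>Z. p z \<ge> 0" "sum p Z = 1" "\<forall>k<n. \<forall>i<m. x k i = L * (\<Sum>z\<in>Z. p z * V z k i)"
      using dec[OF xU0] by blast
    have "nsq n m x = nsq n m (\<lambda>k i. L * (\<Sum>z\<in>Z. p z * V z k i))" by (rule nsq_cong) (use p in auto)
    also have "\<dots> = L^2 * nsq n m (\<lambda>k i. (\<Sum>z\<in>Z. p z * V z k i))" by (rule nsq_scale)
    also have "\<dots> \<le> L^2 * 1"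
      using jensen_nsq[OF finZ, of p n m V] p S2[of p] by (intro mult_left_mono) auto
    finally show ?thesis by simp
  qed
  show ?thesis
  proof (cases "T < 1")
    case True
    have "L^2 < \<epsilon>^2" using True e2 by (simp add: T_def field_simps)
    then obtain W where W: "finite W" "W \<subseteq> U" "card W \<le> card {(\<lambda>(k::nat) (i::nat). 0::real)}"
        "\<forall>x\<in>U. \<exists>w\<in>W. frob_dist n m x w \<le> \<epsilon>"
    proof -
      have "\<exists>W. finite W \<and> W \<subseteq> U \<and> card W \<le> card {(\<lambda>(k::nat) (i::nat). 0::real)} \<and> (\<forall>x\<in>U. \<exists>w\<in>W. frob_dist n m x w \<le> \<epsilon>)"
      proof (rule proj_cover)
        show "\<And>x y t. x \<in> U \<Longrightarrow> y \<in> U \<Longrightarrow> 0 \<le> t \<Longrightarrow> t \<le> 1 \<Longrightarrow> (\<lambda>k i. (1-t) * x k i + t * y k i) \<in> U" by (rule cvx)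
        show "\<And>x. x \<in> U \<Longrightarrow> \<exists>c\<in>{(\<lambda>(k::nat) (i::nat). 0::real)}. nsq n m (\<lambda>k i. x k i - c k i) \<le> L^2" using nsqx by simp
      qed (use Une eps \<open>L^2 < \<epsilon>^2\<close> in auto)
      thus ?thesis using that by blast
    qed
    have "covering_number (frob_dist n m) U \<epsilon> \<le> card W" by (rule cov_le) (use W in auto)
    hence "real (covering_number (frob_dist n m) U \<epsilon>) \<le> real (card Z) ^ 0" using W(3) by simp
    from ln_cov_bound[OF this _ cZ, of T] show ?thesis using True by (simp add: T_def)
  next
    case False
    define K where "K = nat \<lfloor>T\<rfloor>"
    have KT: "real K \<le> T" and TK: "T < real K + 1" and K1: "K \<ge> 1" using False
      by (auto simp: K_def) linarith+
    define q where "q = sqrt (real K)"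
    have q0: "q > 0" and qK: "q^2 = real K" using K1 by (auto simp: q_def)
    define \<alpha> where "\<alpha> = q / (q + 1)"
    define cen where "cen = (\<lambda>xs k i. \<alpha> * L / real K * (\<Sum>z\<leftarrow>xs. V z k i))"
    define C where "C = cen ` {xs. set xs \<subseteq> Z \<and> length xs = K}"
    have finC: "finite C" unfolding C_def using finZ by (simp add: finite_lists_length_eq)
    have cardC: "card C \<le> card Z ^ K" unfolding C_def
      using card_image_le[of "{xs. set xs \<subseteq> Z \<and> length xs = K}" cen] finZ
      by (simp add: finite_lists_length_eq card_lists_length_eq)
    have rho: "L^2/(q+1)^2 < \<epsilon>^2"
    proof -
      have "real K + 1 < (q+1)^2" using qK q0 by (simp add: power2_eq_square algebra_simps)
      hence "T < (q+1)^2" using TK by linarith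
      hence "L^2 < (q+1)^2 * \<epsilon>^2" using e2 by (simp add: T_def field_simps)
      thus ?thesis using q0 by (simp add: field_simps)
    qed
    have cov: "\<exists>c\<in>C. nsq n m (\<lambda>k i. x k i - c k i) \<le> L^2/(q+1)^2" if xU: "x \<in> U" for x
    proof -
      obtain p where p: "\<forall>z\<in>Z. p z \<ge> 0" "sum p Z = 1" "\<forall>k<n. \<forall>i<m. x k i = L * (\<Sum>z\<in>Z. p z * V z k i)"
        using dec[OF xU] by blast
      obtain xs where xs: "set xs \<subseteq> Z" "length xs = K" and
        le: "nsq n m (\<lambda>k i. (1-\<alpha>) * K * x k i + \<alpha> * (real K * x k i - L * (\<Sum>z\<leftarrow>xs. V z k i)))
          \<le> nsq n m (\<lambda>k i. (1-\<alpha>) * K * x k i) + real K * \<alpha>^2 * (L^2 - nsq n m x)"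
        using maurey_step[OF finZ _ p(2) S2[OF p(1,2)], of x L K "\<lambda>k i. (1-\<alpha>) * K * x k i" \<alpha>] p
        by auto
      have eq: "(\<lambda>k i. (1-\<alpha>) * K * x k i + \<alpha> * (real K * x k i - L * (\<Sum>z\<leftarrow>xs. V z k i)))
          = (\<lambda>k i. real K * (x k i - cen xs k i))"
        using K1 by (simp add: cen_def fun_eq_iff algebra_simps)
      define d where "d = nsq n m (\<lambda>k i. x k i - cen xs k i)"
      define y where "y = nsq n m x"
      have "real K ^ 2 * d \<le> (1-\<alpha>)^2 * real K^2 * y + real K * \<alpha>^2 * (L^2 - y)"
        using le unfolding eq nsq_scale d_def y_def by (simp add: power_mult_distrib)
      also have "\<dots> = real K ^ 2 * (L^2/(q+1)^2)"
        using q0 unfolding \<alpha>_def qK[symmetric] by (simp add: field_simps power2_eq_square) (simp add: add_divide_distrib[symmetric])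
      finally have "real K ^ 2 * d \<le> real K ^ 2 * (L^2/(q+1)^2)" .
      moreover have "real K ^ 2 > 0" using K1 by simp
      ultimately have "d \<le> L^2/(q+1)^2" by (rule mult_left_le_imp_le)
      moreover have "cen xs \<in> C" using xs by (auto simp: C_def)
      ultimately show ?thesis by (auto simp: d_def)
    qed
    obtain W where W: "finite W" "W \<subseteq> U" "card W \<le> card C"
        "\<forall>x\<in>U. \<exists>w\<in>W. frob_dist n m x w \<le> \<epsilon>"
    proof -
      have "\<exists>W. finite W \<and> W \<subseteq> U \<and> card W \<le> card C \<and> (\<forall>x\<in>U. \<exists>w\<in>W. frob_dist n m x w \<le> \<epsilon>)"
      proof (rule proj_cover)
        show "\<And>x y t. x \<in> U \<Longrightarrow> y \<in> U \<Longrightarrow> 0 \<le> t \<Longrightarrow> t \<le> 1 \<Longrightarrow> (\<lambda>k i. (1-t) * x k i + t * y k i) \<in> U" by (rule cvx)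
        show "\<And>x. x \<in> U \<Longrightarrow> \<exists>c\<in>C. nsq n m (\<lambda>k i. x k i - c k i) \<le> L^2/(q+1)^2" by (rule cov)
      qed (use Une eps finC rho in auto)
      thus ?thesis using that by blast
    qed
    have "covering_number (frob_dist n m) U \<epsilon> \<le> card Z ^ K"
      using cov_le[OF W(1,2,4)] W(3) cardC by linarith
    hence "real (covering_number (frob_dist n m) U \<epsilon>) \<le> real (card Z) ^ K"
      by (metis of_nat_le_iff of_nat_power)
    from ln_cov_bound[OF this KT cZ] show ?thesis by (simp add: T_def)
  qed
qed



definition Gm :: "nat \<Rightarrow> nat \<Rightarrow> (nat \<Rightarrow> nat \<Rightarrow> 'x \<Rightarrow> real) \<Rightarrow> (nat \<Rightarrow> 'x) \<Rightarrow> nat \<Rightarrow> nat \<Rightarrow> nat \<Rightarrow> nat \<Rightarrow> real" where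
  "Gm n m g X i j = (\<lambda>k i'. if k < n \<and> i' < m \<and> i' = i then g i j (X k) else 0)"

definition aa :: "nat \<Rightarrow> nat \<Rightarrow> (nat \<Rightarrow> nat \<Rightarrow> 'x \<Rightarrow> real) \<Rightarrow> (nat \<Rightarrow> 'x) \<Rightarrow> nat \<Rightarrow> nat \<Rightarrow> real" where
  "aa n m g X i j = sqrt (nsq n m (Gm n m g X i j))"

definition Vat :: "nat \<Rightarrow> nat \<Rightarrow> (nat \<Rightarrow> nat \<Rightarrow> 'x \<Rightarrow> real) \<Rightarrow> (nat \<Rightarrow> 'x) \<Rightarrow> nat \<times> nat \<times> bool \<Rightarrow> nat \<Rightarrow> nat \<Rightarrow> real" where
  "Vat n m g X z = (\<lambda>k i'. (if snd (snd z) then 1 else -1) * (1 / aa n m g X (fst z) (fst (snd z))) * Gm n m g X (fst z) (fst (snd z)) k i')"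

lemma nsq_Gm: assumes "i < m" shows "nsq n m (Gm n m g X i j) = (\<Sum>k<n. (g i j (X k))^2)"
  unfolding nsq_def
proof (intro sum.cong refl)
  fix k assume "k \<in> {..<n}"
  hence "(\<Sum>i'<m. (Gm n m g X i j k i')^2) = (\<Sum>i'<m. if i' = i then (g i j (X k))^2 else 0)"
    by (intro sum.cong) (auto simp: Gm_def)
  also have "\<dots> = (g i j (X k))^2" using assms by simp
  finally show "(\<Sum>i'<m. (Gm n m g X i j k i')^2) = (g i j (X k))^2" .
qed

lemma Vat_le1: "nsq n m (Vat n m g X z) \<le> 1"
proof -
  obtain i j \<sigma> where z: "z = (i,j,\<sigma>)" by (cases z) auto
  have "nsq n m (Vat n m g X z) = nsq n m (\<lambda>k i'. ((if \<sigma> then 1 else -1) * (1 / aa n m g X i j)) * Gm n m g X i j k i')"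
    by (simp add: Vat_def z)
  also have "\<dots> = ((if \<sigma> then 1 else -1) * (1 / aa n m g X i j))^2 * nsq n m (Gm n m g X i j)"
    by (rule nsq_scale)
  also have "\<dots> = (1 / aa n m g X i j)^2 * nsq n m (Gm n m g X i j)"
    by (simp add: power_mult_distrib)
  also have "\<dots> \<le> 1"
  proof (cases "nsq n m (Gm n m g X i j) = 0")
    case False
    hence "nsq n m (Gm n m g X i j) > 0" using nsq_nonneg[of n m "Gm n m g X i j"] by simp
    thus ?thesis by (simp add: aa_def power_divide)
  qed simp
  finally show ?thesis .
qed

lemma Gm_zero:
  assumes "aa n m g X i j = 0" "k < n" "i' < m"
  shows "Gm n m g X i j k i' = 0"
proof -
  have "nsq n m (Gm n m g X i j) = 0" using assms(1) nsq_nonneg[of n m "Gm n m g X i j"] by (simp add: aa_def)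
  hence "\<forall>k\<in>{..<n}. (\<Sum>i''<m. (Gm n m g X i j k i'')^2) = 0"
    unfolding nsq_def by (subst (asm) sum_nonneg_eq_0_iff) (auto intro: sum_nonneg)
  hence "(\<Sum>i''<m. (Gm n m g X i j k i'')^2) = 0" using assms(2) by auto
  hence "\<forall>i''\<in>{..<m}. (Gm n m g X i j k i'')^2 = 0" by (subst (asm) sum_nonneg_eq_0_iff) auto
  thus ?thesis using assms(3) by auto
qed

lemma en_iff:
  assumes "r > 0"  "b > 0"
  shows "entry_norm r m p B \<le> b \<longleftrightarrow> (\<Sum>i<m. \<Sum>j<p. \<bar>B i j\<bar> powr r) \<le> b powr r"
proof -
  define S where "S = (\<Sum>i<m. \<Sum>j<p. \<bar>B i j\<bar> powr r)"
  have S0: "S \<ge> 0" unfolding S_def by (intro sum_nonneg) auto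
  have en: "entry_norm r m p B = S powr (1/r)" by (simp add: entry_norm_def S_def)
  show ?thesis unfolding en S_def[symmetric]
  proof
    assume "S powr (1/r) \<le> b"
    hence "(S powr (1/r)) powr r \<le> b powr r" by (intro powr_mono2) (use assms S0 in auto)
    thus "S \<le> b powr r" using assms S0 by (simp add: powr_powr)
  next
    assume "S \<le> b powr r"
    hence "S powr (1/r) \<le> (b powr r) powr (1/r)" by (intro powr_mono2) (use assms S0 in auto)
    thus "S powr (1/r) \<le> b" using assms by (simp add: powr_powr)
  qed
qed

lemma U_convex:
  assumes r: "r \<ge> 1" and b: "b > 0"
    and x: "x \<in> {Psi_mat m p n g X B | B. entry_norm r m p B \<le> b}"
    and y: "y \<in> {Psi_mat m p n g X B | B. entry_norm r m p B \<le> b}"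
    and t: "0 \<le> t" "t \<le> 1"
  shows "(\<lambda>k i. (1-t) * x k i + t * y k i) \<in> {Psi_mat m p n g X B | B. entry_norm r m p B \<le> b}"
proof -
  obtain B1 where B1: "x = Psi_mat m p n g X B1" "entry_norm r m p B1 \<le> b" using x by auto
  obtain B2 where B2: "y = Psi_mat m p n g X B2" "entry_norm r m p B2 \<le> b" using y by auto
  define B where "B = (\<lambda>i j. (1-t) * B1 i j + t * B2 i j)"
  have eq: "(\<lambda>k i. (1-t) * x k i + t * y k i) = Psi_mat m p n g X B"
  proof (intro ext)
    fix k i
    have "(\<Sum>j<p. B i j * g i j (X k)) = (1-t) * (\<Sum>j<p. B1 i j * g i j (X k)) + t * (\<Sum>j<p. B2 i j * g i j (X k))"
      unfolding B_def sum_distrib_left sum.distrib[symmetric] by (intro sum.cong refl) (simp add: algebra_simps)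
    thus "(1-t) * x k i + t * y k i = Psi_mat m p n g X B k i"
      unfolding B1 B2 Psi_mat_def by simp
  qed
  have "(\<Sum>i<m. \<Sum>j<p. \<bar>B i j\<bar> powr r) \<le> (\<Sum>i<m. \<Sum>j<p. (1-t) * \<bar>B1 i j\<bar> powr r + t * \<bar>B2 i j\<bar> powr r)"
  proof (intro sum_mono)
    fix i j
    have "\<bar>B i j\<bar> \<le> \<bar>(1-t) * B1 i j\<bar> + \<bar>t * B2 i j\<bar>" unfolding B_def by (rule abs_triangle_ineq)
    also have "\<dots> = (1-t) * \<bar>B1 i j\<bar> + t * \<bar>B2 i j\<bar>" using t by (simp add: abs_mult)
    finally have "\<bar>B i j\<bar> \<le> (1-t) * \<bar>B1 i j\<bar> + t * \<bar>B2 i j\<bar>" .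
    hence "\<bar>B i j\<bar> powr r \<le> ((1-t) * \<bar>B1 i j\<bar> + t * \<bar>B2 i j\<bar>) powr r"
      by (intro powr_mono2) (use r in auto)
    also have "\<dots> \<le> (1-t) * \<bar>B1 i j\<bar> powr r + t * \<bar>B2 i j\<bar> powr r"
      by (rule cvx_powr) (use r t in auto)
    finally show "\<bar>B i j\<bar> powr r \<le> (1-t) * \<bar>B1 i j\<bar> powr r + t * \<bar>B2 i j\<bar> powr r" .
  qed
  also have "\<dots> = (1-t) * (\<Sum>i<m. \<Sum>j<p. \<bar>B1 i j\<bar> powr r) + t * (\<Sum>i<m. \<Sum>j<p. \<bar>B2 i j\<bar> powr r)"
    by (simp add: sum.distrib sum_distrib_left)
  also have "\<dots> \<le> (1-t) * b powr r + t * b powr r"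
    using B1(2) B2(2) en_iff[of r b m p] r b t
    by (intro add_mono mult_left_mono) auto
  also have "\<dots> = b powr r" by (simp add: algebra_simps)
  finally have "entry_norm r m p B \<le> b" using en_iff[of r b m p B] r b by simp
  thus ?thesis unfolding eq by blast
qed



lemma sumZ:
  fixes F :: "nat \<times> nat \<times> bool \<Rightarrow> real"
  shows "(\<Sum>z\<in>{..<m} \<times> {..<p} \<times> {True,False}. F z) = (\<Sum>i<m. \<Sum>j<p. F (i,j,True) + F (i,j,False))"
proof -
  have "(\<Sum>z\<in>{..<m} \<times> {..<p} \<times> {True,False}. F z) = (\<Sum>i<m. \<Sum>y\<in>{..<p} \<times> {True,False}. F (i,y))"
    by (subst sum.cartesian_product) (simp add: split_beta)
  also have "\<dots> = (\<Sum>i<m. \<Sum>j<p. \<Sum>\<sigma>\<in>{True,False}. F (i,j,\<sigma>))"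
    by (intro sum.cong refl, subst sum.cartesian_product) (simp add: split_beta)
  also have "\<dots> = (\<Sum>i<m. \<Sum>j<p. F (i,j,True) + F (i,j,False))" by simp
  finally show ?thesis .
qed

lemma sumJ:
  fixes F :: "nat \<Rightarrow> nat \<Rightarrow> real"
  shows "(\<Sum>i<m. \<Sum>j<p. F i j) = (\<Sum>z\<in>{..<m} \<times> {..<p}. F (fst z) (snd z))"
  by (simp add: sum.cartesian_product split_beta)

lemma W_bound:
  assumes r: "r > 1" and s: "s > 1" and rs: "1/r + 1/s = 1" and v: "0 < v" "v \<le> 2"
    and b: "b > 0" and c: "c > 0" and G: "G_norm v s m p n g X \<le> c" and B: "entry_norm r m p B \<le> b"
  shows "(\<Sum>i<m. \<Sum>j<p. \<bar>B i j\<bar> * aa n m g X i j) \<le> b * c"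
proof -
  let ?J = "{..<m} \<times> {..<p}"
  define ell where "ell = (\<lambda>i j. (\<Sum>k<n. \<bar>g i j (X k)\<bar> powr v))"
  define A where "A = (\<Sum>z\<in>?J. aa n m g X (fst z) (snd z) powr s) powr (1/s)"
  have aa_le: "aa n m g X i j \<le> ell i j powr (1/v)" if "i < m" for i j
    unfolding aa_def nsq_Gm[OF that] ell_def by (rule lv_l2) (use v in auto)
  have aa0: "aa n m g X i j \<ge> 0" for i j by (simp add: aa_def nsq_nonneg)
  have "(\<Sum>i<m. \<Sum>j<p. \<bar>B i j\<bar> * aa n m g X i j) = (\<Sum>z\<in>?J. \<bar>B (fst z) (snd z)\<bar> * aa n m g X (fst z) (snd z))"
    by (rule sumJ)
  also have "\<dots> \<le> (\<Sum>z\<in>?J. \<bar>B (fst z) (snd z)\<bar> powr r) powr (1/r) * A"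
    unfolding A_def by (rule holder) (use r s rs aa0 in auto)
  also have "(\<Sum>z\<in>?J. \<bar>B (fst z) (snd z)\<bar> powr r) powr (1/r) = entry_norm r m p B"
    unfolding entry_norm_def sumJ ..
  finally have H: "(\<Sum>i<m. \<Sum>j<p. \<bar>B i j\<bar> * aa n m g X i j) \<le> entry_norm r m p B * A" .
  have Ac: "A \<le> c"
  proof -
    have "(\<Sum>z\<in>?J. aa n m g X (fst z) (snd z) powr s) = (\<Sum>i<m. \<Sum>j<p. aa n m g X i j powr s)"
      by (rule sumJ[symmetric])
    also have "\<dots> \<le> (\<Sum>i<m. \<Sum>j<p. ell i j powr (s/v))"
    proof (intro sum_mono)
      fix i j assume "i \<in> {..<m}"
      hence "aa n m g X i j powr s \<le> (ell i j powr (1/v)) powr s"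
        using aa_le aa0 s by (intro powr_mono2) auto
      thus "aa n m g X i j powr s \<le> ell i j powr (s/v)" by (simp add: powr_powr)
    qed
    finally have le: "(\<Sum>z\<in>?J. aa n m g X (fst z) (snd z) powr s) \<le> (\<Sum>i<m. \<Sum>j<p. ell i j powr (s/v))" .
    have "A \<le> (\<Sum>i<m. \<Sum>j<p. ell i j powr (s/v)) powr (1/s)"
      unfolding A_def by (intro powr_mono2 le) (use s in \<open>auto intro: sum_nonneg\<close>)
    also have "\<dots> = G_norm v s m p n g X" by (simp add: G_norm_def ell_def)
    finally show ?thesis using G by linarith
  qed
  have "entry_norm r m p B * A \<le> b * c"
    by (intro mult_mono B Ac) (use b in \<open>auto simp: A_def entry_norm_def\<close>)
  with H show ?thesis by linarith
qed



lemma decomp: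
  fixes B :: "nat \<Rightarrow> nat \<Rightarrow> real"
  assumes mp: "m \<ge> 1" "p \<ge> 1" and L: "L > 0" and WL: "(\<Sum>i<m. \<Sum>j<p. \<bar>B i j\<bar> * aa n m g X i j) \<le> L"
  shows "\<exists>pw. (\<forall>z\<in>{..<m}\<times>{..<p}\<times>{True,False}. pw z \<ge> 0) \<and> sum pw ({..<m}\<times>{..<p}\<times>{True,False}) = 1 \<and>
     (\<forall>k<n. \<forall>i<m. Psi_mat m p n g X B k i = L * (\<Sum>z\<in>{..<m}\<times>{..<p}\<times>{True,False}. pw z * Vat n m g X z k i))"
proof -
  define W where "W = (\<Sum>i<m. \<Sum>j<p. \<bar>B i j\<bar> * aa n m g X i j)"
  define q where "q = (1 - W/L) / (2 * real m * real p)"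
  have aa0: "aa n m g X i j \<ge> 0" for i j by (simp add: aa_def nsq_nonneg)
  have q0: "q \<ge> 0" using WL L mp by (simp add: q_def W_def field_simps)
  define pw where "pw = (\<lambda>z::nat\<times>nat\<times>bool. (if snd (snd z) = (0 \<le> B (fst z) (fst (snd z)))
      then \<bar>B (fst z) (fst (snd z))\<bar> * aa n m g X (fst z) (fst (snd z)) / L else 0) + q)"
  show ?thesis
  proof (intro exI[of _ pw] conjI ballI allI impI)
    fix z assume "z \<in> {..<m}\<times>{..<p}\<times>{True,False}"
    show "pw z \<ge> 0" unfolding pw_def using q0 aa0 L by (auto intro!: divide_nonneg_pos)
  next
    have pair: "pw (i,j,True) + pw (i,j,False) = \<bar>B i j\<bar> * aa n m g X i j / L + 2 * q" for i j
      unfolding pw_def by auto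
    have "sum pw ({..<m}\<times>{..<p}\<times>{True,False}) = (\<Sum>i<m. \<Sum>j<p. \<bar>B i j\<bar> * aa n m g X i j / L + 2 * q)"
      unfolding sumZ pair ..
    also have "\<dots> = W / L + real m * real p * 2 * q"
      by (simp add: sum.distrib W_def sum_divide_distrib)
    also have "\<dots> = 1" using mp by (simp add: q_def field_simps)
    finally show "sum pw ({..<m}\<times>{..<p}\<times>{True,False}) = 1" .
  next
    fix k i' assume k: "k < n" and i': "i' < m"
    have pair: "pw (i,j,True) * Vat n m g X (i,j,True) k i' + pw (i,j,False) * Vat n m g X (i,j,False) k i'
        = B i j * Gm n m g X i j k i' / L" for i j
    proof (cases "aa n m g X i j = 0")
      case True
      thus ?thesis using Gm_zero[OF True k i'] by (simp add: Vat_def)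
    next
      case False
      thus ?thesis unfolding pw_def Vat_def by (auto simp: field_simps)
    qed
    have "(\<Sum>z\<in>{..<m}\<times>{..<p}\<times>{True,False}. pw z * Vat n m g X z k i') = (\<Sum>i<m. \<Sum>j<p. B i j * Gm n m g X i j k i' / L)"
      unfolding sumZ pair ..
    also have "\<dots> = (\<Sum>i<m. if i = i' then (\<Sum>j<p. B i' j * g i' j (X k)) / L else 0)"
      using k i' by (intro sum.cong refl) (auto simp: Gm_def sum_divide_distrib)
    also have "\<dots> = (\<Sum>j<p. B i' j * g i' j (X k)) / L" using i' by simp
    finally show "Psi_mat m p n g X B k i' = L * (\<Sum>z\<in>{..<m}\<times>{..<p}\<times>{True,False}. pw z * Vat n m g X z k i')"
      using k i' L by (simp add: Psi_mat_def)
  qed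
qed

theorem proposition2:
  fixes g :: "nat \<Rightarrow> nat \<Rightarrow> real^'d \<Rightarrow> real"
    and X :: "nat \<Rightarrow> real^'d"
    and m p n :: nat and v r s b c \<epsilon> :: real
  assumes "m \<ge> 1" "p \<ge> 1" "n \<ge> 1"
    and "0 < v" "v \<le> 2" "r > 0" "s > 0" "1 / r + 1 / s = 1"
    and "b > 0" "c > 0"
    and "G_norm v s m p n g X \<le> c"
    and "\<epsilon> > 0"
  shows "ln (real (covering_number (frob_dist n m)
            {Psi_mat m p n g X B | B. entry_norm r m p B \<le> b} \<epsilon>))
         \<le> b^2 * c^2 / \<epsilon>^2 * ln (2 * real m * real p)"
proof -
  note as = assms
  let ?U = "{Psi_mat m p n g X B | B. entry_norm r m p B \<le> b}"
  let ?Z = "{..<m}\<times>{..<p}\<times>{True,False}"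
  have r1: "r > 1"
  proof -
    have "1/s > 0" using as(7) by simp
    hence "1/r < 1" using as(8) by linarith
    thus ?thesis using as(6) by (simp add: field_simps)
  qed
  have s1: "s > 1"
  proof -
    have "1/r > 0" using as(6) by simp
    hence "1/s < 1" using as(8) by linarith
    thus ?thesis using as(7) by (simp add: field_simps)
  qed
  have L: "b * c > 0" using as(9,10) by simp
  have "ln (real (covering_number (frob_dist n m) ?U \<epsilon>)) \<le> (b*c)^2/\<epsilon>^2 * ln (real (card ?Z))"
  proof (rule abstract_cover[where V = "Vat n m g X"])
    show "\<And>x y t. x \<in> ?U \<Longrightarrow> y \<in> ?U \<Longrightarrow> 0 \<le> t \<Longrightarrow> t \<le> 1 \<Longrightarrow> (\<lambda>k i. (1-t) * x k i + t * y k i) \<in> ?U"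
      by (rule U_convex) (use r1 as(9) in auto)
    have "entry_norm r m p (\<lambda>i j. 0) \<le> b" using as(9) r1 by (simp add: entry_norm_def)
    thus "?U \<noteq> {}" by blast
    show "finite ?Z" by simp
    have "(0,0,True) \<in> ?Z" using as(1,2) by auto
    thus "?Z \<noteq> {}" by blast
    show "\<And>z. z \<in> ?Z \<Longrightarrow> nsq n m (Vat n m g X z) \<le> 1" by (rule Vat_le1)
    show "b * c > 0" by (rule L)
    show "\<epsilon> > 0" by (rule as(12))
    fix x assume "x \<in> ?U"
    then obtain B where B: "x = Psi_mat m p n g X B" "entry_norm r m p B \<le> b" by auto
    have "(\<Sum>i<m. \<Sum>j<p. \<bar>B i j\<bar> * aa n m g X i j) \<le> b * c"
      by (rule W_bound[OF r1 s1 as(8,4,5,9,10,11) B(2)])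
    from decomp[OF as(1,2) L this]
    show "\<exists>pw. (\<forall>z\<in>?Z. pw z \<ge> 0) \<and> sum pw ?Z = 1 \<and>
        (\<forall>k<n. \<forall>i<m. x k i = (b*c) * (\<Sum>z\<in>?Z. pw z * Vat n m g X z k i))"
      unfolding B(1) .
  qed
  moreover have cZ: "real (card ?Z) = 2 * real m * real p" by (simp add: card_cartesian_product)
  moreover have bc: "(b*c)^2 = b^2 * c^2" by (simp add: power_mult_distrib)
  ultimately show ?thesis by metis
qed


end
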